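(* Let ${\bm G}$ be a random matrix in $\mathbb{R}^{m\times n}$ with $\mathbb{E}[{\bm G}]={\bm M}$ and $\mathbb{E}[\|{\bm G}-{\bm M}\|_F^\alpha]\le\sigma^\alpha$ for some $\alpha\in(1,2]$, $\sigma>0$. Let $\tau>0$ and suppose $\|{\bm M}\|_F\le\tau/2$. Then $$\big\|{\bm M}-\mathbb{E}[\mathcal{C}_\tau({\bm G})]\big\|_F^2\le 2^{2\alpha}\,\tau^{-2(\alpha-1)}\sigma^{2\alpha}\le 16\,\tau^{-2(\alpha-1)}\sigma^{2\alpha}.$$
   Context: $\|\cdot\|_F$ is the Frobenius norm. Spectral clipping: for ${\bm G}\in\mathbb{R}^{m\times n}$ with (thin) SVD ${\bm G}={\bm U}\,\mathrm{diag}(\sigma_1,\dots,\sigma_d){\bm V}^\top$, $d=\min\{m,n\}$, and threshold $\tau>0$, define $\mathcal{C}_\tau({\bm G}):={\bm U}\,\mathrm{diag}(\min\{\sigma_1,\tau\},\dots,\min\{\sigma_d,\tau\}){\bm V}^\top$. *)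

theory Defs
  imports "HOL-Probability.Probability"
begin

text \<open>Matrices in R^{m x n} are represented as real^'n^'m (row index 'm, column
index 'n); the norm on this type is the Frobenius norm.\<close>

definition outer_prod :: "real^'m \<Rightarrow> real^'n \<Rightarrow> real^'n^'m" where
  "outer_prod x y = (\<chi> i j. x $ i * y $ j)"

text \<open>Thin SVD G = U diag(s_0,...,s_{d-1}) V^T, d = min m n, written via the columns
u_k of U and v_k of V (orthonormal families) and nonnegative singular values s_k.\<close>
definition is_thin_svd :: "real^'n^'m \<Rightarrow> (nat \<Rightarrow> real^'m) \<Rightarrow> (nat \<Rightarrow> real) \<Rightarrow> (nat \<Rightarrow> real^'n) \<Rightarrow> bool" where
  "is_thin_svd G u s v \<longleftrightarrow>
     (let d = min CARD('m) CARD('n) in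
       (\<forall>i<d. \<forall>j<d. u i \<bullet> u j = (if i = j then 1 else 0)) \<and>
       (\<forall>i<d. \<forall>j<d. v i \<bullet> v j = (if i = j then 1 else 0)) \<and>
       (\<forall>k<d. 0 \<le> s k) \<and>
       G = (\<Sum>k<d. s k *\<^sub>R outer_prod (u k) (v k)))"

definition spec_clip :: "real \<Rightarrow> real^'n^'m \<Rightarrow> real^'n^'m" where
  "spec_clip \<tau> G =
     (case (SOME (u, s, v). is_thin_svd G u s v) of (u, s, v) \<Rightarrow>
        (\<Sum>k<min CARD('m) CARD('n). min (s k) \<tau> *\<^sub>R outer_prod (u k) (v k)))"

end

theory Submission
  imports Defs
begin


lemma outer_mult: "outer_prod a b *v w = (b \<bullet> w) *\<^sub>R a"
  by (simp add: outer_prod_def matrix_vector_mult_def inner_vec_def vec_eq_iff sum_distrib_left ac_simps)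

lemma outer_tmult: "transpose (outer_prod a b) *v w = (a \<bullet> w) *\<^sub>R b"
  by (simp add: outer_prod_def transpose_def matrix_vector_mult_def inner_vec_def vec_eq_iff sum_distrib_left ac_simps)

lemma outer_inner: "outer_prod a b \<bullet> outer_prod c d = (a \<bullet> c) * (b \<bullet> d)"
proof -
  have "outer_prod a b \<bullet> outer_prod c d = (\<Sum>i\<in>UNIV. \<Sum>j\<in>UNIV. (a $ i * c $ i) * (b $ j * d $ j))"
    unfolding outer_prod_def inner_vec_def by (simp add: mult_ac)
  also have "\<dots> = (\<Sum>i\<in>UNIV. (a $ i * c $ i) * (\<Sum>j\<in>UNIV. b $ j * d $ j))"
    by (simp add: sum_distrib_left)
  also have "\<dots> = (a \<bullet> c) * (b \<bullet> d)"
    by (simp add: inner_vec_def sum_distrib_right)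
  finally show ?thesis .
qed

lemma adj: "(R *v x) \<bullet> y = x \<bullet> (transpose R *v y)" for R :: "real^'n^'m"
proof -
  have "x \<bullet> (transpose R *v y) = (y v* R) \<bullet> x" by (simp add: inner_commute)
  also have "\<dots> = y \<bullet> (R *v x)" by (rule dot_lmul_matrix)
  also have "\<dots> = (R *v x) \<bullet> y" by (rule inner_commute)
  finally show ?thesis by (rule sym)
qed

lemma norm_sum_outer:
  fixes d :: nat
  assumes ou: "\<forall>i<d. \<forall>j<d. u i \<bullet> u j = (if i = j then 1 else 0)"
    and ov: "\<forall>i<d. \<forall>j<d. v i \<bullet> v j = (if i = j then 1 else 0)"
  shows "(norm (\<Sum>k<d. c k *\<^sub>R outer_prod (u k) (v k)))\<^sup>2 = (\<Sum>k<d. (c k)\<^sup>2)"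
proof -
  have inner_k: "(\<Sum>l<d. c l * ((u l \<bullet> u k) * (v l \<bullet> v k))) = c k" if k: "k < d" for k
  proof -
    have "(\<Sum>l<d. c l * ((u l \<bullet> u k) * (v l \<bullet> v k))) = (\<Sum>l<d. if l = k then c l else 0)"
    proof (rule sum.cong[OF refl])
      fix l assume "l \<in> {..<d}"
      then show "c l * ((u l \<bullet> u k) * (v l \<bullet> v k)) = (if l = k then c l else 0)"
        using ou ov k by simp
    qed
    also have "\<dots> = c k" using k by (subst sum.delta) auto
    finally show ?thesis .
  qed
  have "(norm (\<Sum>k<d. c k *\<^sub>R outer_prod (u k) (v k)))\<^sup>2
     = (\<Sum>k<d. c k * (\<Sum>l<d. c l * ((u l \<bullet> u k) * (v l \<bullet> v k))))"
    by (simp add: power2_norm_eq_inner inner_sum_left inner_sum_right outer_inner ac_simps)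
  also have "\<dots> = (\<Sum>k<d. c k * c k)"
    using inner_k by (intro sum.cong refl) simp
  also have "\<dots> = (\<Sum>k<d. (c k)\<^sup>2)"
    by (simp add: power2_eq_square)
  finally show ?thesis .
qed


lemma norm_diff_expand:
  fixes w x :: "'a::real_inner"
  shows "(norm (w - s *\<^sub>R x))\<^sup>2 = (norm w)\<^sup>2 - 2 * s * (w \<bullet> x) + s\<^sup>2 * (norm x)\<^sup>2"
proof -
  have "(norm (w - s *\<^sub>R x))\<^sup>2 = (w - s *\<^sub>R x) \<bullet> (w - s *\<^sub>R x)" by (rule power2_norm_eq_inner)
  also have "\<dots> = w \<bullet> w - 2 * s * (w \<bullet> x) + s\<^sup>2 * (x \<bullet> x)"
    by (simp add: inner_diff_left inner_diff_right inner_commute algebra_simps power2_eq_square)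
  finally show ?thesis by (simp add: power2_norm_eq_inner)
qed

lemma svd_step:
  fixes R :: "real^'n^'m" and u :: "nat \<Rightarrow> real^'m" and v :: "nat \<Rightarrow> real^'n"
  assumes km: "k < CARD('m)" and kn: "k < CARD('n)"
    and Rv: "\<forall>i<k. R *v v i = 0" and Ru: "\<forall>i<k. transpose R *v u i = 0"
  shows "\<exists>s0 u0 v0. 0 \<le> s0 \<and> u0 \<bullet> u0 = 1 \<and> v0 \<bullet> v0 = 1 \<and>
     (\<forall>i<k. u0 \<bullet> u i = 0 \<and> v0 \<bullet> v i = 0) \<and> R *v v0 = s0 *\<^sub>R u0 \<and> transpose R *v u0 = s0 *\<^sub>R v0"
proof -
  have "sphere (0::real^'n) 1 \<noteq> {}" by (simp add: sphere_def) (metis norm_sgn one_neq_zero axis_nth vector_choose_size zero_le_one)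
  moreover have "continuous_on (sphere (0::real^'n) 1) (\<lambda>x. norm (R *v x))"
    by (intro continuous_intros)
  ultimately obtain x where x: "x \<in> sphere 0 1" and xmax: "\<And>y. y \<in> sphere 0 1 \<Longrightarrow> norm (R *v y) \<le> norm (R *v x)"
    using continuous_attains_sup[OF compact_sphere] by metis
  define s where "s = norm (R *v x)"
  have nx: "norm x = 1" using x by simp
  have bound: "norm (R *v y) \<le> s * norm y" for y
  proof (cases "y = 0")
    case True then show ?thesis by simp
  next
    case False
    have "(1 / norm y) *\<^sub>R y \<in> sphere 0 1" using False by simp
    then have "norm (R *v ((1 / norm y) *\<^sub>R y)) \<le> s" using xmax s_def by blast
    then have "norm (R *v y) / norm y \<le> s" using False by (simp add: matrix_vector_mult_scaleR divide_inverse ac_simps)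
    then show ?thesis using False by (simp add: divide_le_eq ac_simps)
  qed
  have tbound: "norm (transpose R *v z) \<le> s * norm z" for z
  proof -
    let ?w = "transpose R *v z"
    have "(norm ?w)\<^sup>2 = (R *v ?w) \<bullet> z" by (simp add: power2_norm_eq_inner adj)
    also have "\<dots> \<le> norm (R *v ?w) * norm z" by (rule norm_cauchy_schwarz)
    also have "\<dots> \<le> s * norm ?w * norm z" using bound by (simp add: mult_right_mono)
    finally have "norm ?w * norm ?w \<le> (s * norm z) * norm ?w" by (simp add: power2_eq_square ac_simps)
    then show ?thesis
      by (cases "norm ?w = 0") (auto simp: s_def)
  qed
  show ?thesis
  proof (cases "s = 0")
    case True
    have R0: "R *v y = 0" for y using bound[of y] True by simp
    have Rt0: "transpose R *v z = 0" for z using tbound[of z] True by simp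
    have dimu: "dim (u ` {..<k}) < DIM(real^'m)"
      using dim_le_card'[of "u ` {..<k}"] card_image_le[of "{..<k}" u] km by simp
    obtain a where a: "a \<noteq> 0" "\<And>y. y \<in> span (u ` {..<k}) \<Longrightarrow> orthogonal a y"
      using orthogonal_to_subspace_exists[OF dimu] by blast
    have dimv: "dim (v ` {..<k}) < DIM(real^'n)"
      using dim_le_card'[of "v ` {..<k}"] card_image_le[of "{..<k}" v] kn by simp
    obtain b where b: "b \<noteq> 0" "\<And>y. y \<in> span (v ` {..<k}) \<Longrightarrow> orthogonal b y"
      using orthogonal_to_subspace_exists[OF dimv] by blast
    define u0 where "u0 = (1 / norm a) *\<^sub>R a"
    define v0 where "v0 = (1 / norm b) *\<^sub>R b"
    have c1: "u0 \<bullet> u0 = 1" using a(1) by (simp add: u0_def dot_square_norm power2_eq_square)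
    have c2: "v0 \<bullet> v0 = 1" using b(1) by (simp add: v0_def dot_square_norm power2_eq_square)
    have c3: "\<forall>i<k. u0 \<bullet> u i = 0 \<and> v0 \<bullet> v i = 0"
      using a(2) b(2) by (auto simp: u0_def v0_def orthogonal_def span_base)
    have c4: "R *v v0 = 0 *\<^sub>R u0" using R0 by simp
    have c5: "transpose R *v u0 = 0 *\<^sub>R v0" using Rt0 by (simp del: transpose_matrix_vector)
    have c0: "(0::real) \<le> 0" by simp
    show ?thesis
      apply (rule exI[of _ 0], rule exI[of _ u0], rule exI[of _ v0])
      using c0 c1 c2 c3 c4 c5 by (intro conjI) assumption+
  next
    case False
    then have sp: "s > 0" using s_def by simp
    define u0 where "u0 = (1 / s) *\<^sub>R (R *v x)"
    have u0u0: "u0 \<bullet> u0 = 1" using sp by (simp add: u0_def dot_square_norm power2_eq_square s_def)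
    have Rx: "R *v x = s *\<^sub>R u0" using sp by (simp add: u0_def)
    let ?w = "transpose R *v u0"
    have nw: "norm ?w \<le> s" using tbound[of u0] u0u0 by (simp add: norm_eq_sqrt_inner)
    have wx: "?w \<bullet> x = s" using adj[of R x u0] Rx u0u0 by (simp add: inner_commute)
    have "(norm (?w - s *\<^sub>R x))\<^sup>2 = (norm ?w)\<^sup>2 - 2 * s * (?w \<bullet> x) + s\<^sup>2 * (norm x)\<^sup>2"
      by (rule norm_diff_expand)
    also have "\<dots> \<le> 0" using nw wx nx sp
      by (simp add: power2_eq_square) (smt (verit) mult_mono norm_ge_zero)
    finally have Rtu: "?w = s *\<^sub>R x" by simp
    have ou: "\<forall>i<k. u0 \<bullet> u i = 0"
    proof (intro allI impI)
      fix i assume "i < k"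
      then have "x \<bullet> (transpose R *v u i) = 0" using Ru by simp
      then show "u0 \<bullet> u i = 0" by (simp add: u0_def adj)
    qed
    have ov: "\<forall>i<k. x \<bullet> v i = 0"
    proof (intro allI impI)
      fix i assume "i < k"
      then have "(R *v v i) \<bullet> u0 = 0" using Rv by simp
      then have "v i \<bullet> ?w = 0" using adj[of R "v i" u0] by (simp only:)
      then have "v i \<bullet> (s *\<^sub>R x) = 0" by (simp only: Rtu)
      then have "(s *\<^sub>R x) \<bullet> v i = 0" by (simp add: inner_commute)
      then show "x \<bullet> v i = 0" using sp by simp
    qed
    have xx: "x \<bullet> x = 1" using nx by (simp add: dot_square_norm)
    have s0: "0 \<le> s" using sp by simp
    have ouv: "\<forall>i<k. u0 \<bullet> u i = 0 \<and> x \<bullet> v i = 0" using ou ov by simp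
    show ?thesis
      apply (rule exI[of _ s], rule exI[of _ u0], rule exI[of _ x])
      using s0 u0u0 xx ouv Rx Rtu by (intro conjI) assumption+
  qed
qed


lemma mv_diff_scale: "(A - c *\<^sub>R B) *v w = A *v w - c *\<^sub>R (B *v w)"
  for A B :: "real^'n^'m"
  by (simp add: matrix_vector_mult_def vec_eq_iff sum_subtractf algebra_simps sum_distrib_left)

lemma tmv_diff_scale: "transpose (A - c *\<^sub>R B) *v w = transpose A *v w - c *\<^sub>R (transpose B *v w)"
  for A B :: "real^'n^'m"
  by (simp add: transpose_def matrix_vector_mult_def vec_eq_iff sum_subtractf algebra_simps sum_distrib_left)

lemma svd_partial:
  fixes G :: "real^'n^'m"
  shows "k \<le> min CARD('m) CARD('n) \<Longrightarrow> \<exists>u s v.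
     (\<forall>i<k. \<forall>j<k. u i \<bullet> u j = (if i = j then 1 else 0)) \<and>
     (\<forall>i<k. \<forall>j<k. v i \<bullet> v j = (if i = j then 1 else 0)) \<and>
     (\<forall>i<k. 0 \<le> s i) \<and>
     (\<forall>i<k. (G - (\<Sum>l<k. s l *\<^sub>R outer_prod (u l) (v l))) *v v i = 0 \<and>
            transpose (G - (\<Sum>l<k. s l *\<^sub>R outer_prod (u l) (v l))) *v u i = 0)"
proof (induction k)
  case 0
  then show ?case by simp
next
  case (Suc k)
  then obtain u s v where ou: "\<forall>i<k. \<forall>j<k. u i \<bullet> u j = (if i = j then 1 else 0)"
    and ov: "\<forall>i<k. \<forall>j<k. v i \<bullet> v j = (if i = j then 1 else 0)"
    and sp: "\<forall>i<k. 0 \<le> s i"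
    and RR: "\<forall>i<k. (G - (\<Sum>l<k. s l *\<^sub>R outer_prod (u l) (v l))) *v v i = 0 \<and>
            transpose (G - (\<Sum>l<k. s l *\<^sub>R outer_prod (u l) (v l))) *v u i = 0"
    by auto
  define R where "R = G - (\<Sum>l<k. s l *\<^sub>R outer_prod (u l) (v l))"
  have km: "k < CARD('m)" and kn: "k < CARD('n)" using Suc.prems by auto
  obtain s0 u0 v0 where s0: "0 \<le> s0" and u0: "u0 \<bullet> u0 = 1" and v0: "v0 \<bullet> v0 = 1"
    and orth: "\<forall>i<k. u0 \<bullet> u i = 0 \<and> v0 \<bullet> v i = 0"
    and Rv0: "R *v v0 = s0 *\<^sub>R u0" and Ru0: "transpose R *v u0 = s0 *\<^sub>R v0"
    using svd_step[OF km kn, of R v u] RR unfolding R_def by blast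
  define u' where "u' = u(k := u0)"
  define v' where "v' = v(k := v0)"
  define s' where "s' = s(k := s0)"
  have sum_eq: "(\<Sum>l<Suc k. s' l *\<^sub>R outer_prod (u' l) (v' l))
      = (\<Sum>l<k. s l *\<^sub>R outer_prod (u l) (v l)) + s0 *\<^sub>R outer_prod u0 v0"
    unfolding u'_def v'_def s'_def by (simp add: sum.lessThan_Suc)
  have R': "G - (\<Sum>l<Suc k. s' l *\<^sub>R outer_prod (u' l) (v' l)) = R - s0 *\<^sub>R outer_prod u0 v0"
    unfolding sum_eq R_def by simp
  have ou': "\<forall>i<Suc k. \<forall>j<Suc k. u' i \<bullet> u' j = (if i = j then 1 else 0)"
    using ou orth u0 by (auto simp: u'_def less_Suc_eq inner_commute)
  have ov': "\<forall>i<Suc k. \<forall>j<Suc k. v' i \<bullet> v' j = (if i = j then 1 else 0)"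
    using ov orth v0 by (auto simp: v'_def less_Suc_eq inner_commute)
  have sp': "\<forall>i<Suc k. 0 \<le> s' i" using sp s0 by (auto simp: s'_def less_Suc_eq)
  have RR': "\<forall>i<Suc k. (R - s0 *\<^sub>R outer_prod u0 v0) *v v' i = 0 \<and>
            transpose (R - s0 *\<^sub>R outer_prod u0 v0) *v u' i = 0"
    using RR orth Rv0 Ru0 u0 v0
    by (auto simp: mv_diff_scale tmv_diff_scale outer_mult outer_tmult u'_def v'_def less_Suc_eq
        R_def inner_commute simp del: transpose_matrix_vector)
  show ?case
    by (rule exI[of _ u'], rule exI[of _ s'], rule exI[of _ v']) (use ou' ov' sp' RR' R' in auto)
qed

lemma zero_on_onb:
  fixes A :: "real^'k^'j" and w :: "nat \<Rightarrow> real^'k"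
  assumes ow: "\<forall>i<CARD('k). \<forall>j<CARD('k). w i \<bullet> w j = (if i = j then 1 else 0)"
    and Aw: "\<forall>i<CARD('k). A *v w i = 0"
  shows "A = 0"
proof -
  let ?V = "w ` {..<CARD('k)}"
  have inj: "inj_on w {..<CARD('k)}"
  proof (rule inj_onI)
    fix i j assume "i \<in> {..<CARD('k)}" "j \<in> {..<CARD('k)}" "w i = w j"
    then show "i = j" using ow by (metis (no_types, lifting) lessThan_iff zero_neq_one)
  qed
  have "pairwise orthogonal ?V"
    using ow by (auto simp: pairwise_def orthogonal_def)
  moreover have "0 \<notin> ?V"
  proof
    assume "0 \<in> ?V"
    then obtain i where i: "i < CARD('k)" "w i = 0" by auto
    have "w i \<bullet> w i = 1" using ow i(1) by simp
    then show False using i(2) by simp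
  qed
  ultimately have ind: "independent ?V" by (rule pairwise_orthogonal_independent)
  have "dim (UNIV :: (real^'k) set) \<le> card ?V" using card_image[OF inj] by simp
  then have "UNIV \<subseteq> span ?V" using card_ge_dim_independent[of ?V UNIV] ind by simp
  then have "\<forall>x. A *v x = 0 *v x"
    using real_vector.linear_eq_0_on_span[of "\<lambda>x. A *v x" ?V] Aw by auto
  then show ?thesis by (simp add: matrix_eq)
qed

lemma svd_exists:
  fixes G :: "real^'n^'m"
  shows "\<exists>u s v. is_thin_svd G u s v"
proof -
  define d where "d = min CARD('m) CARD('n)"
  obtain u s v where ou: "\<forall>i<d. \<forall>j<d. u i \<bullet> u j = (if i = j then 1 else 0)"
    and ov: "\<forall>i<d. \<forall>j<d. v i \<bullet> v j = (if i = j then 1 else 0)"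
    and sp: "\<forall>i<d. 0 \<le> s i"
    and RR: "\<forall>i<d. (G - (\<Sum>l<d. s l *\<^sub>R outer_prod (u l) (v l))) *v v i = 0 \<and>
            transpose (G - (\<Sum>l<d. s l *\<^sub>R outer_prod (u l) (v l))) *v u i = 0"
    using svd_partial[of d G] unfolding d_def by auto
  define R where "R = G - (\<Sum>l<d. s l *\<^sub>R outer_prod (u l) (v l))"
  have "R = 0"
  proof (cases "d = CARD('n)")
    case True
    then show ?thesis using zero_on_onb[of v R] ov RR unfolding R_def by auto
  next
    case False
    then have "d = CARD('m)" unfolding d_def by linarith
    then have "transpose R = 0" using zero_on_onb[of u "transpose R"] ou RR unfolding R_def by auto
    then have "transpose (transpose R) = transpose 0" by simp
    then show ?thesis by (simp add: transpose_def vec_eq_iff)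
  qed
  then have "G = (\<Sum>l<d. s l *\<^sub>R outer_prod (u l) (v l))" unfolding R_def by simp
  then show ?thesis using ou ov sp unfolding is_thin_svd_def d_def Let_def by blast
qed


lemma clip_repr:
  fixes G :: "real^'n^'m"
  obtains u s v where "is_thin_svd G u s v"
    "spec_clip \<tau> G = (\<Sum>k<min CARD('m) CARD('n). min (s k) \<tau> *\<^sub>R outer_prod (u k) (v k))"
proof -
  obtain u s v where uv: "(SOME (u, s, v). is_thin_svd G u s v) = (u, s, v)" by (metis prod_cases3)
  have ex: "\<exists>x. (\<lambda>(u, s, v). is_thin_svd G u s v) x" using svd_exists[of G] by auto
  have "(\<lambda>(u, s, v). is_thin_svd G u s v) (SOME x. (\<lambda>(u, s, v). is_thin_svd G u s v) x)"
    by (rule someI_ex[OF ex])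
  then have "is_thin_svd G u s v" using uv by simp
  moreover have "spec_clip \<tau> G = (\<Sum>k<min CARD('m) CARD('n). min (s k) \<tau> *\<^sub>R outer_prod (u k) (v k))"
    unfolding spec_clip_def uv by simp
  ultimately show ?thesis using that by blast
qed

lemma clip_props:
  fixes G :: "real^'n^'m"
  assumes tau: "0 < \<tau>"
  shows "norm (G - spec_clip \<tau> G) \<le> norm G" and "norm G \<le> \<tau> \<Longrightarrow> spec_clip \<tau> G = G"
proof -
  obtain u s v where svd: "is_thin_svd G u s v"
    and C: "spec_clip \<tau> G = (\<Sum>k<min CARD('m) CARD('n). min (s k) \<tau> *\<^sub>R outer_prod (u k) (v k))"
    by (rule clip_repr)
  define d where "d = min CARD('m) CARD('n)"
  have ou: "\<forall>i<d. \<forall>j<d. u i \<bullet> u j = (if i = j then 1 else 0)"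
    and ov: "\<forall>i<d. \<forall>j<d. v i \<bullet> v j = (if i = j then 1 else 0)"
    and sp: "\<forall>k<d. 0 \<le> s k"
    and Geq: "G = (\<Sum>k<d. s k *\<^sub>R outer_prod (u k) (v k))"
    using svd unfolding is_thin_svd_def d_def Let_def by auto
  have C': "spec_clip \<tau> G = (\<Sum>k<d. min (s k) \<tau> *\<^sub>R outer_prod (u k) (v k))"
    using C d_def by simp
  have nG: "(norm G)\<^sup>2 = (\<Sum>k<d. (s k)\<^sup>2)"
    using norm_sum_outer[OF ou ov, of s] Geq by simp
  have "G - spec_clip \<tau> G = (\<Sum>k<d. (s k - min (s k) \<tau>) *\<^sub>R outer_prod (u k) (v k))"
    unfolding C' by (subst Geq) (simp add: sum_subtractf scaleR_diff_left)
  then have nD: "(norm (G - spec_clip \<tau> G))\<^sup>2 = (\<Sum>k<d. (s k - min (s k) \<tau>)\<^sup>2)"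
    using norm_sum_outer[OF ou ov, of "\<lambda>k. s k - min (s k) \<tau>"] by simp
  have "(\<Sum>k<d. (s k - min (s k) \<tau>)\<^sup>2) \<le> (\<Sum>k<d. (s k)\<^sup>2)"
  proof (rule sum_mono)
    fix k assume "k \<in> {..<d}"
    then have "0 \<le> s k" using sp by simp
    then show "(s k - min (s k) \<tau>)\<^sup>2 \<le> (s k)\<^sup>2" using tau
      by (intro power_mono) (auto simp: min_def)
  qed
  then have "(norm (G - spec_clip \<tau> G))\<^sup>2 \<le> (norm G)\<^sup>2" using nD nG by simp
  then show "norm (G - spec_clip \<tau> G) \<le> norm G" by (rule power2_le_imp_le[OF _ norm_ge_zero])
  assume nGt: "norm G \<le> \<tau>"
  have "spec_clip \<tau> G = (\<Sum>k<d. s k *\<^sub>R outer_prod (u k) (v k))"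
    unfolding C'
  proof (rule sum.cong[OF refl])
    fix k assume k: "k \<in> {..<d}"
    have "(s k)\<^sup>2 \<le> (\<Sum>k<d. (s k)\<^sup>2)" using k by (intro member_le_sum) auto
    also have "\<dots> = (norm G)\<^sup>2" using nG by (rule sym)
    also have "\<dots> \<le> \<tau>\<^sup>2" using nGt by (intro power_mono) simp_all
    finally have "(s k)\<^sup>2 \<le> \<tau>\<^sup>2" .
    then have "s k \<le> \<tau>" by (rule power2_le_imp_le) (use tau in auto)
    then show "min (s k) \<tau> *\<^sub>R outer_prod (u k) (v k) = s k *\<^sub>R outer_prod (u k) (v k)" by simp
  qed
  then show "spec_clip \<tau> G = G" using Geq by simp
qed


lemma pw_bound:
  fixes dn g x m \<tau> \<alpha> :: real
  assumes tau: "0 < \<tau>" and al: "1 < \<alpha>" and dn0: "0 \<le> dn" and dng: "dn \<le> g" and small: "g \<le> \<tau> \<Longrightarrow> dn = 0"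
    and tri: "g \<le> x + m" and m: "m \<le> \<tau> / 2" and x0: "0 \<le> x"
  shows "dn \<le> 2 powr \<alpha> * \<tau> powr (1 - \<alpha>) * x powr \<alpha>"
proof (cases "g \<le> \<tau>")
  case True
  then show ?thesis using small by simp
next
  case False
  then have xg: "x > \<tau> / 2" using tri m by linarith
  then have xp: "x > 0" using tau by simp
  have "1 \<le> (2 * x / \<tau>) powr (\<alpha> - 1)"
    using xg tau al by (intro ge_one_powr_ge_zero) (auto simp: field_simps)
  also have "(2 * x / \<tau>) powr (\<alpha> - 1) = 2 powr (\<alpha> - 1) * x powr (\<alpha> - 1) / \<tau> powr (\<alpha> - 1)"
    using xp tau by (simp add: powr_divide powr_mult)
  finally have A: "1 \<le> 2 powr (\<alpha> - 1) * x powr (\<alpha> - 1) / \<tau> powr (\<alpha> - 1)" .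
  have "2 powr \<alpha> * \<tau> powr (1 - \<alpha>) * x powr \<alpha>
      = (2 * x) * (2 powr (\<alpha> - 1) * x powr (\<alpha> - 1) / \<tau> powr (\<alpha> - 1))"
  proof -
    have e1: "2 powr \<alpha> = 2 * 2 powr (\<alpha> - 1)" by (simp add: powr_diff)
    have e2: "x powr \<alpha> = x * x powr (\<alpha> - 1)" using xp by (simp add: powr_diff)
    have e3: "\<tau> powr (1 - \<alpha>) = 1 / \<tau> powr (\<alpha> - 1)" using tau
      by (metis minus_diff_eq powr_minus_divide)
    show ?thesis unfolding e1 e2 e3 by simp
  qed
  moreover have "2 * x \<le> (2 * x) * (2 powr (\<alpha> - 1) * x powr (\<alpha> - 1) / \<tau> powr (\<alpha> - 1))"
    using mult_left_mono[OF A, of "2 * x"] xp by (simp only: mult_1_right)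
  moreover have "dn \<le> 2 * x" using dng tri m xg by linarith
  ultimately show ?thesis by linarith
qed

theorem mainTheorem7:
  fixes P :: "'a measure"
    and G :: "'a \<Rightarrow> real^'n^'m"
    and M :: "real^'n^'m"
    and \<alpha> \<sigma> \<tau> :: real
  assumes "prob_space P"
    and "integrable P G"
    and "M = prob_space.expectation P G"
    and "1 < \<alpha>" and "\<alpha> \<le> 2" and "0 < \<sigma>"
    and "(\<integral>\<^sup>+ \<omega>. ennreal (norm (G \<omega> - M) powr \<alpha>) \<partial>P) \<le> ennreal (\<sigma> powr \<alpha>)"
    and "0 < \<tau>"
    and "norm M \<le> \<tau> / 2"
    and "integrable P (\<lambda>\<omega>. spec_clip \<tau> (G \<omega>))"
  shows "(norm (M - prob_space.expectation P (\<lambda>\<omega>. spec_clip \<tau> (G \<omega>))))\<^sup>2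
           \<le> 2 powr (2 * \<alpha>) * \<tau> powr (- 2 * (\<alpha> - 1)) * \<sigma> powr (2 * \<alpha>)
       \<and> 2 powr (2 * \<alpha>) * \<tau> powr (- 2 * (\<alpha> - 1)) * \<sigma> powr (2 * \<alpha>)
           \<le> 16 * \<tau> powr (- 2 * (\<alpha> - 1)) * \<sigma> powr (2 * \<alpha>)"
proof -
  note ps = assms(1) and intG = assms(2) and Mdef = assms(3) and al1 = assms(4) and al2 = assms(5)
    and sig = assms(6) and mom = assms(7) and tau = assms(8) and Msm = assms(9) and intC = assms(10)
  define K where "K = 2 powr \<alpha> * \<tau> powr (1 - \<alpha>)"
  have K0: "0 \<le> K" unfolding K_def by simp
  define D where "D = (\<lambda>\<omega>. G \<omega> - spec_clip \<tau> (G \<omega>))"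
  have intD: "integrable P D" unfolding D_def using intG intC by (rule Bochner_Integration.integrable_diff)
  have ED: "M - integral\<^sup>L P (\<lambda>\<omega>. spec_clip \<tau> (G \<omega>)) = integral\<^sup>L P D"
    unfolding Mdef D_def using intG intC by (simp add: Bochner_Integration.integral_diff)
  have pw: "norm (D \<omega>) \<le> K * norm (G \<omega> - M) powr \<alpha>" for \<omega>
  proof -
    have "norm (D \<omega>) \<le> 2 powr \<alpha> * \<tau> powr (1 - \<alpha>) * norm (G \<omega> - M) powr \<alpha>"
    proof (rule pw_bound[OF tau al1 _ _ _ _ Msm])
      show "0 \<le> norm (D \<omega>)" by simp
      show "norm (D \<omega>) \<le> norm (G \<omega>)" unfolding D_def by (rule clip_props(1)[OF tau])
      show "norm (D \<omega>) = 0" if "norm (G \<omega>) \<le> \<tau>" unfolding D_def using clip_props(2)[OF tau that] by simp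
      show "norm (G \<omega>) \<le> norm (G \<omega> - M) + norm M" using norm_triangle_ineq[of "G \<omega> - M" M] by simp
      show "0 \<le> norm (G \<omega> - M)" by simp
    qed
    then show ?thesis unfolding K_def .
  qed
  have meas: "(\<lambda>\<omega>. ennreal (norm (G \<omega> - M) powr \<alpha>)) \<in> borel_measurable P"
    using borel_measurable_integrable[OF intG] by measurable
  have "ennreal (norm (integral\<^sup>L P D)) \<le> (\<integral>\<^sup>+ \<omega>. ennreal (norm (D \<omega>)) \<partial>P)"
    using integral_norm_bound_ennreal[OF intD] by simp
  also have "\<dots> \<le> (\<integral>\<^sup>+ \<omega>. ennreal K * ennreal (norm (G \<omega> - M) powr \<alpha>) \<partial>P)"
    by (intro nn_integral_mono) (use pw K0 in \<open>simp add: ennreal_mult[symmetric]\<close>)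
  also have "\<dots> = ennreal K * (\<integral>\<^sup>+ \<omega>. ennreal (norm (G \<omega> - M) powr \<alpha>) \<partial>P)"
    by (rule nn_integral_cmult[OF meas])
  also have "\<dots> \<le> ennreal K * ennreal (\<sigma> powr \<alpha>)"
    by (intro mult_left_mono mom) simp
  also have "\<dots> = ennreal (K * \<sigma> powr \<alpha>)" using K0 by (simp add: ennreal_mult)
  finally have nb: "norm (integral\<^sup>L P D) \<le> K * \<sigma> powr \<alpha>"
    using K0 by (subst (asm) ennreal_le_iff) auto
  have sq: "(K * \<sigma> powr \<alpha>)\<^sup>2 = 2 powr (2 * \<alpha>) * \<tau> powr (- 2 * (\<alpha> - 1)) * \<sigma> powr (2 * \<alpha>)"
  proof -
    have "\<And>a::real. 0 < a \<Longrightarrow> \<forall>y. (a powr y)\<^sup>2 = a powr (2 * y)"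
      by (simp add: power2_eq_square powr_add[symmetric])
    then show ?thesis using tau sig unfolding K_def
      by (simp add: power_mult_distrib algebra_simps)
  qed
  have part1: "(norm (M - prob_space.expectation P (\<lambda>\<omega>. spec_clip \<tau> (G \<omega>))))\<^sup>2
           \<le> 2 powr (2 * \<alpha>) * \<tau> powr (- 2 * (\<alpha> - 1)) * \<sigma> powr (2 * \<alpha>)"
    unfolding ED sq[symmetric] using nb by (intro power_mono) auto
  have "2 powr (2 * \<alpha>) \<le> 2 powr (4::real)" using al2 by (intro powr_mono) auto
  also have "(2::real) powr (4::real) = 16" by simp
  finally have "2 powr (2 * \<alpha>) \<le> (16::real)" .
  then have part2: "2 powr (2 * \<alpha>) * \<tau> powr (- 2 * (\<alpha> - 1)) * \<sigma> powr (2 * \<alpha>)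
           \<le> 16 * \<tau> powr (- 2 * (\<alpha> - 1)) * \<sigma> powr (2 * \<alpha>)"
    by (intro mult_right_mono) auto
  show ?thesis using part1 part2 by blast
qed

end
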